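(* Let $(\mathcal G,c,v_0,v_1)$ be a properly embedded doubly marked finite weighted planar map (with properly embedded dual) such that for every $x\in\mathcal V\mathcal G$ every point $p$ of the metric graph with $\mathfrak h(p)=\mathfrak h(x)$ is a vertex. Let $a\in(0,1)$ with $\mathfrak h^{-1}(a)\subset\mathcal V\mathcal G$ nonempty, and let $X^{\mu_a}$ be the random walk on $(\mathcal G,c)$ with $X_0$ distributed according to $\mu_a$. Let $N\in\mathbb N$ and $a_0=a,a_1,\dots,a_N\in(0,1)$ be admissible, i.e. $\mathbb P_{\mu_a}(\mathfrak h(X_{n+1})=a_{n+1}\mid\mathfrak h(X_n)=a_n)>0$ for $n=0,\dots,N-1$. Then for every $i\in\{0,\dots,N\}$ and every $x_i\in\mathfrak h^{-1}(a_i)$, $$\mathbb P_{\mu_a}\big(X_i=x_i\ \big|\ \{\mathfrak h(X_n)=a_n\}_{n=1}^N\big)=\mu_{a_i}(x_i).$$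
   Context: A doubly marked finite weighted planar map $(\mathcal G,c,v_0,v_1)$ is a finite connected planar multigraph with positive edge conductances and marked vertices $v_0,v_1$, properly embedded in $\mathcal C_{2\pi}=\mathbb R/2\pi\mathbb Z\times\mathbb R$ (non-crossing edges, $v_0$ at $-\infty$, $v_1$ at $+\infty$), with its dual properly embedded (each edge crossed once by a dual edge joining its two incident faces). The random walk moves $x\to y$ with probability $c_{xy}/\pi(x)$. Voltage $\mathfrak h$: $\mathfrak h(v_0)=0$, $\mathfrak h(v_1)=1$, harmonic elsewhere; extended to the metric graph $\mathbb G$ (each edge an isometric copy of $[0,1]$) by linear interpolation along edges. $\nabla\mathfrak h(e)=c_e(\mathfrak h(e^+)-\mathfrak h(e^-))$; an edge is harmonically oriented if $\mathfrak h(e^+)\ge\mathfrak h(e^-)$; $\eta=\sum\nabla\mathfrak h(e)$ over harmonically oriented edges with tail $v_0$. For $x\in\mathcal V\mathcal G$, $\mathrm{length}(x)=\sum\nabla\mathfrak h(e)$ over harmonically oriented edges with head $x$ (the length of the horizontal segment of $x$ in the Smith diagram). For $a\in(0,1)$, $\mu_a(x)=\mathrm{length}(x)/\eta$ for $x\in\mathfrak h^{-1}(a)$; this is a probability measure on $\mathfrak h^{-1}(a)$. *)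

theory Defs
  imports "HOL-Analysis.Analysis"
begin

text \<open>A finite weighted multigraph is given by a vertex set V, an edge index set E,
  an endpoint map ends (each edge gets an arbitrary reference orientation) and
  conductances c.\<close>

definition cond :: "'e set \<Rightarrow> ('e \<Rightarrow> 'v \<times> 'v) \<Rightarrow> ('e \<Rightarrow> real) \<Rightarrow> 'v \<Rightarrow> 'v \<Rightarrow> real" where
  "cond E ends c x y = (\<Sum>e\<in>{e\<in>E. ends e = (x,y) \<or> ends e = (y,x)}. c e)"

definition stat :: "'v set \<Rightarrow> 'e set \<Rightarrow> ('e \<Rightarrow> 'v \<times> 'v) \<Rightarrow> ('e \<Rightarrow> real) \<Rightarrow> 'v \<Rightarrow> real" where
  "stat V E ends c x = (\<Sum>y\<in>V. cond E ends c x y)"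

definition trans :: "'v set \<Rightarrow> 'e set \<Rightarrow> ('e \<Rightarrow> 'v \<times> 'v) \<Rightarrow> ('e \<Rightarrow> real) \<Rightarrow> 'v \<Rightarrow> 'v \<Rightarrow> real" where
  "trans V E ends c x y = cond E ends c x y / stat V E ends c x"

definition adj :: "'e set \<Rightarrow> ('e \<Rightarrow> 'v \<times> 'v) \<Rightarrow> ('v \<times> 'v) set" where
  "adj E ends = {(u,w). \<exists>e\<in>E. ends e = (u,w) \<or> ends e = (w,u)}"

definition graph_connected :: "'v set \<Rightarrow> 'e set \<Rightarrow> ('e \<Rightarrow> 'v \<times> 'v) \<Rightarrow> bool" where
  "graph_connected V E ends = (\<forall>x\<in>V. \<forall>y\<in>V. (x,y) \<in> (adj E ends)\<^sup>*)"

definition plane_embeddable :: "'v set \<Rightarrow> 'e set \<Rightarrow> ('e \<Rightarrow> 'v \<times> 'v) \<Rightarrow> bool" where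
  "plane_embeddable V E ends =
    (\<exists>(pos :: 'v \<Rightarrow> complex) (\<gamma> :: 'e \<Rightarrow> real \<Rightarrow> complex).
       inj_on pos V \<and>
       (\<forall>e\<in>E. simple_path (\<gamma> e) \<and> pathstart (\<gamma> e) = pos (fst (ends e))
                \<and> pathfinish (\<gamma> e) = pos (snd (ends e))) \<and>
       (\<forall>e\<in>E. \<forall>e'\<in>E. e \<noteq> e' \<longrightarrow> \<gamma> e ` {0<..<1} \<inter> \<gamma> e' ` {0<..<1} = {}) \<and>
       (\<forall>e\<in>E. \<gamma> e ` {0<..<1} \<inter> pos ` V = {}))"

definition doubly_marked_map ::
  "'v set \<Rightarrow> 'e set \<Rightarrow> ('e \<Rightarrow> 'v \<times> 'v) \<Rightarrow> ('e \<Rightarrow> real) \<Rightarrow> 'v \<Rightarrow> 'v \<Rightarrow> bool" where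
  "doubly_marked_map V E ends c v0 v1 =
    (finite V \<and> finite E \<and> (\<forall>e\<in>E. fst (ends e) \<in> V \<and> snd (ends e) \<in> V)
     \<and> (\<forall>e\<in>E. c e > 0) \<and> v0 \<in> V \<and> v1 \<in> V \<and> v0 \<noteq> v1
     \<and> graph_connected V E ends \<and> plane_embeddable V E ends)"

definition is_voltage ::
  "'v set \<Rightarrow> 'e set \<Rightarrow> ('e \<Rightarrow> 'v \<times> 'v) \<Rightarrow> ('e \<Rightarrow> real) \<Rightarrow> 'v \<Rightarrow> 'v \<Rightarrow> ('v \<Rightarrow> real) \<Rightarrow> bool" where
  "is_voltage V E ends c v0 v1 h =
    (h v0 = 0 \<and> h v1 = 1 \<and>
     (\<forall>x\<in>V - {v0, v1}. h x = (\<Sum>y\<in>V. trans V E ends c x y * h y)))"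

text \<open>Oriented edges (darts): (e, True) has the reference orientation, (e, False) the reversed one.\<close>
definition dtail :: "('e \<Rightarrow> 'v \<times> 'v) \<Rightarrow> 'e \<times> bool \<Rightarrow> 'v" where
  "dtail ends d = (if snd d then fst (ends (fst d)) else snd (ends (fst d)))"

definition dhead :: "('e \<Rightarrow> 'v \<times> 'v) \<Rightarrow> 'e \<times> bool \<Rightarrow> 'v" where
  "dhead ends d = (if snd d then snd (ends (fst d)) else fst (ends (fst d)))"

definition grad :: "('e \<Rightarrow> 'v \<times> 'v) \<Rightarrow> ('e \<Rightarrow> real) \<Rightarrow> ('v \<Rightarrow> real) \<Rightarrow> 'e \<times> bool \<Rightarrow> real" where
  "grad ends c h d = c (fst d) * (h (dhead ends d) - h (dtail ends d))"

definition harm_oriented :: "('e \<Rightarrow> 'v \<times> 'v) \<Rightarrow> ('v \<Rightarrow> real) \<Rightarrow> 'e \<times> bool \<Rightarrow> bool" where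
  "harm_oriented ends h d = (h (dhead ends d) \<ge> h (dtail ends d))"

definition seg_length ::
  "'e set \<Rightarrow> ('e \<Rightarrow> 'v \<times> 'v) \<Rightarrow> ('e \<Rightarrow> real) \<Rightarrow> ('v \<Rightarrow> real) \<Rightarrow> 'v \<Rightarrow> real" where
  "seg_length E ends c h x =
     (\<Sum>d\<in>{d \<in> E \<times> UNIV. harm_oriented ends h d \<and> dhead ends d = x}. grad ends c h d)"

definition eta ::
  "'e set \<Rightarrow> ('e \<Rightarrow> 'v \<times> 'v) \<Rightarrow> ('e \<Rightarrow> real) \<Rightarrow> ('v \<Rightarrow> real) \<Rightarrow> 'v \<Rightarrow> real" where
  "eta E ends c h v0 =
     (\<Sum>d\<in>{d \<in> E \<times> UNIV. harm_oriented ends h d \<and> dtail ends d = v0}. grad ends c h d)"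

definition mu ::
  "'v set \<Rightarrow> 'e set \<Rightarrow> ('e \<Rightarrow> 'v \<times> 'v) \<Rightarrow> ('e \<Rightarrow> real) \<Rightarrow> ('v \<Rightarrow> real) \<Rightarrow> 'v \<Rightarrow> real \<Rightarrow> 'v \<Rightarrow> real" where
  "mu V E ends c h v0 a x =
     (if x \<in> V \<and> h x = a then seg_length E ends c h x / eta E ends c h v0 else 0)"

definition walk_paths :: "'v set \<Rightarrow> nat \<Rightarrow> 'v list set" where
  "walk_paths V N = {xs. length xs = Suc N \<and> set xs \<subseteq> V}"

definition walk_prob ::
  "'v set \<Rightarrow> 'e set \<Rightarrow> ('e \<Rightarrow> 'v \<times> 'v) \<Rightarrow> ('e \<Rightarrow> real) \<Rightarrow> ('v \<Rightarrow> real) \<Rightarrow> nat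
   \<Rightarrow> ('v list \<Rightarrow> bool) \<Rightarrow> real" where
  "walk_prob V E ends c init N A =
     (\<Sum>xs\<in>{xs \<in> walk_paths V N. A xs}.
        init (xs ! 0) * (\<Prod>n<N. trans V E ends c (xs ! n) (xs ! Suc n)))"

end

theory Submission
  imports Defs
begin


lemma walk_paths_fin: "finite V \<Longrightarrow> finite (walk_paths V N)"
  unfolding walk_paths_def
  using finite_lists_length_eq[of V "Suc N"] by (simp add: conj_commute)

lemma walk_prob_alt: "finite V \<Longrightarrow> walk_prob V E ends c init N A =
  (\<Sum>xs\<in>walk_paths V N. if A xs then init (xs ! 0) * (\<Prod>n<N. trans V E ends c (xs ! n) (xs ! Suc n)) else 0)"
  unfolding walk_prob_def
  by (simp add: sum.inter_filter[symmetric] walk_paths_fin)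

lemma walk_prob_cong:
  assumes "\<forall>x\<in>V. f x = g x" "\<forall>xs\<in>walk_paths V N. A xs = B xs"
  shows "walk_prob V E ends c f N A = walk_prob V E ends c g N B"
proof -
  have "\<forall>xs\<in>walk_paths V N. xs ! 0 \<in> V"
    unfolding walk_paths_def by (auto intro!: nth_mem[THEN subsetD[rotated]])
  then have "{xs \<in> walk_paths V N. A xs} = {xs \<in> walk_paths V N. B xs}" using assms by auto
  then show ?thesis unfolding walk_prob_def
    by (intro sum.cong) (auto simp: walk_paths_def intro!: arg_cong2[where f="(*)"] assms(1)[rule_format] elim!: nth_mem[THEN subsetD[rotated]])
qed

lemma walk_prob_first:
  assumes "finite V"
  shows "walk_prob V E ends c init N (\<lambda>ys. P (ys ! 0) \<and> A ys) =
         walk_prob V E ends c (\<lambda>y. if P y then init y else 0) N A"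
  using assms by (simp add: walk_prob_alt if_distrib cong: if_cong) (intro sum.cong; auto)

lemma walk_prob_sum:
  assumes "finite V" "finite I"
  shows "walk_prob V E ends c (\<lambda>y. \<Sum>x\<in>I. f x y) N A = (\<Sum>x\<in>I. walk_prob V E ends c (f x) N A)"
  using assms by (simp add: walk_prob_def sum_distrib_right sum.swap[of _ I])

lemma walk_prob_0:
  assumes "finite V"
  shows "walk_prob V E ends c init 0 A = (\<Sum>x\<in>V. if A [x] then init x else 0)"
proof -
  have eq: "walk_paths V 0 = (\<lambda>x. [x]) ` V"
    unfolding walk_paths_def by (auto simp: length_Suc_conv)
  show ?thesis
    unfolding walk_prob_alt[OF assms] eq
    by (subst sum.reindex) (auto simp: inj_on_def intro!: sum.cong)
qed

lemma walk_paths_Suc: "walk_paths V (Suc N) = (\<lambda>(x,ys). x # ys) ` (V \<times> walk_paths V N)"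
  unfolding walk_paths_def by (auto simp: length_Suc_conv image_iff)

lemma walk_prob_Suc_gen:
  assumes "finite V"
  shows "walk_prob V E ends c init (Suc N) A =
    (\<Sum>x\<in>V. walk_prob V E ends c (\<lambda>y. init x * trans V E ends c x y) N (\<lambda>ys. A (x # ys)))"
proof -
  have "walk_prob V E ends c init (Suc N) A =
    (\<Sum>(x,ys)\<in>V \<times> walk_paths V N. if A (x#ys) then init x * (\<Prod>n<Suc N. trans V E ends c ((x#ys) ! n) ((x#ys) ! Suc n)) else 0)"
    unfolding walk_prob_alt[OF assms] walk_paths_Suc
    by (subst sum.reindex) (auto simp: inj_on_def intro!: sum.cong)
  also have "\<dots> = (\<Sum>x\<in>V. \<Sum>ys\<in>walk_paths V N. if A (x#ys) then init x * (\<Prod>n<Suc N. trans V E ends c ((x#ys) ! n) ((x#ys) ! Suc n)) else 0)"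
    by (rule sum.cartesian_product[symmetric])
  also have "\<dots> = (\<Sum>x\<in>V. walk_prob V E ends c (\<lambda>y. init x * trans V E ends c x y) N (\<lambda>ys. A (x # ys)))"
    unfolding walk_prob_alt[OF assms]
    by (intro sum.cong refl) (simp only: prod.lessThan_Suc_shift, simp add: mult_ac)
  finally show ?thesis .
qed

lemma walk_prob_Suc:
  assumes "finite V" "\<forall>x\<in>V. \<forall>ys\<in>walk_paths V N. A (x#ys) = (B x \<and> A' ys)"
  shows "walk_prob V E ends c init (Suc N) A =
    walk_prob V E ends c (\<lambda>y. \<Sum>x\<in>V. if B x then init x * trans V E ends c x y else 0) N A'"
proof -
  have "walk_prob V E ends c init (Suc N) A =
    (\<Sum>x\<in>V. walk_prob V E ends c (\<lambda>y. if B x then init x * trans V E ends c x y else 0) N A')"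
    unfolding walk_prob_Suc_gen[OF assms(1)]
  proof (intro sum.cong refl)
    fix x assume x: "x \<in> V"
    show "walk_prob V E ends c (\<lambda>y. init x * trans V E ends c x y) N (\<lambda>ys. A (x # ys)) =
       walk_prob V E ends c (\<lambda>y. if B x then init x * trans V E ends c x y else 0) N A'"
    proof (cases "B x")
      case True
      then show ?thesis by (intro walk_prob_cong) (use assms(2) x in auto)
    next
      case False
      then show ?thesis using assms x by (auto simp: walk_prob_alt intro!: sum.neutral)
    qed
  qed
  also have "\<dots> = walk_prob V E ends c (\<lambda>y. \<Sum>x\<in>V. if B x then init x * trans V E ends c x y else 0) N A'"
    by (rule walk_prob_sum[symmetric]) (use assms in auto)
  finally show ?thesis .
qed




locale LG =
  fixes V :: "'v set" and E :: "'e set" and ends :: "'e \<Rightarrow> 'v \<times> 'v"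
    and c :: "'e \<Rightarrow> real" and v0 v1 :: 'v and h :: "'v \<Rightarrow> real"
  assumes finV: "finite V" and finE: "finite E"
    and endsV: "\<forall>e\<in>E. fst (ends e) \<in> V \<and> snd (ends e) \<in> V"
    and cpos: "\<forall>e\<in>E. c e > 0" and v0V: "v0 \<in> V" and v1V: "v1 \<in> V"
    and volt: "is_voltage V E ends c v0 v1 h"
    and lv: "\<forall>x\<in>V. \<forall>e\<in>E. \<forall>t::real. 0 < t \<and> t < 1 \<longrightarrow>
           (1 - t) * h (fst (ends e)) + t * h (snd (ends e)) \<noteq> h x"
begin

abbreviation "cd \<equiv> cond E ends c"
abbreviation "st \<equiv> stat V E ends c"
abbreviation "p \<equiv> trans V E ends c"

lemma hv0: "h v0 = 0" and hv1: "h v1 = 1"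
  using volt by (auto simp: is_voltage_def)

lemma harm: "x \<in> V - {v0, v1} \<Longrightarrow> h x = (\<Sum>y\<in>V. p x y * h y)"
  using volt by (auto simp: is_voltage_def)

lemma cd_sym: "cd x y = cd y x"
  unfolding cond_def by (simp add: disj_commute)

lemma cd_nonneg: "cd x y \<ge> 0"
  unfolding cond_def using cpos by (auto intro!: sum_nonneg simp: less_imp_le)

lemma st_nonneg: "st x \<ge> 0"
  unfolding stat_def by (intro sum_nonneg) (simp add: cd_nonneg)

lemma p_nonneg: "p x y \<ge> 0"
  unfolding trans_def by (simp add: cd_nonneg st_nonneg)

lemma cd_edge: assumes "cd x y \<noteq> 0"
  obtains e where "e \<in> E" "ends e = (x,y) \<or> ends e = (y,x)"
proof -
  have "{e\<in>E. ends e = (x,y) \<or> ends e = (y,x)} \<noteq> {}"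
    using assms unfolding cond_def by (metis sum.empty)
  then show ?thesis using that by blast
qed

lemma noskip1:
  assumes e: "e \<in> E" and z: "z \<in> V" and lt: "h (fst (ends e)) < h z" "h z < h (snd (ends e))"
  shows False
proof -
  define u w where "u = h (fst (ends e))" and "w = h (snd (ends e))"
  define t where "t = (h z - u) / (w - u)"
  have t: "0 < t" "t < 1" using lt unfolding t_def u_def w_def by (auto simp: field_simps)
  have ne: "w - u \<noteq> 0" using lt unfolding u_def w_def by auto
  have "t * (w - u) = h z - u" unfolding t_def using ne by simp
  moreover have "(1 - t) * u + t * w = u + t * (w - u)" by (simp add: algebra_simps)
  ultimately have "(1 - t) * u + t * w = h z" by simp
  then show False using lv z e t unfolding u_def w_def by blast
qed

lemma noskip2:
  assumes e: "e \<in> E" and z: "z \<in> V" and lt: "h (snd (ends e)) < h z" "h z < h (fst (ends e))"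
  shows False
proof -
  define u w where "u = h (fst (ends e))" and "w = h (snd (ends e))"
  define t where "t = (u - h z) / (u - w)"
  have t: "0 < t" "t < 1" using lt unfolding t_def u_def w_def by (auto simp: field_simps)
  have ne: "u - w \<noteq> 0" using lt unfolding u_def w_def by auto
  have "t * (u - w) = u - h z" unfolding t_def using ne by simp
  moreover have "(1 - t) * u + t * w = u - t * (u - w)" by (simp add: algebra_simps)
  ultimately have "(1 - t) * u + t * w = h z" by simp
  then show False using lv z e t unfolding u_def w_def by blast
qed

lemma cd_noskip: assumes "cd x y \<noteq> 0" "z \<in> V" "h x < h z" "h z < h y" shows False
proof -
  obtain e where "e \<in> E" "ends e = (x,y) \<or> ends e = (y,x)" using cd_edge assms(1) by blast
  then show False using noskip1[of e z] noskip2[of e z] assms by auto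
qed

lemma cd_neq: assumes "cd x y \<noteq> 0" shows "h x \<noteq> h y"
proof
  assume eq: "h x = h y"
  obtain e where e: "e \<in> E" "ends e = (x,y) \<or> ends e = (y,x)" using cd_edge assms(1) by blast
  then have xV: "x \<in> V" using endsV by (metis fst_conv snd_conv)
  have "(1 - 1/2) * h (fst (ends e)) + (1/2) * h (snd (ends e)) = h x"
    using e eq by auto
  moreover have "\<forall>t::real. 0<t \<and> t<1 \<longrightarrow> (1-t)*h(fst (ends e))+t*h(snd (ends e)) \<noteq> h x"
    using lv xV e(1) by blast
  ultimately show False by (metis (no_types) field_sum_of_halves half_gt_zero_iff zero_less_one less_add_same_cancel1 one_add_one)
qed

lemma cd_outside: "x \<notin> V \<Longrightarrow> cd x y = 0"
  unfolding cond_def using endsV by (auto intro!: sum.neutral)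

end



context LG begin

lemma edge_sum_one:
  fixes k :: real and m :: "'v \<Rightarrow> real"
  assumes u: "u \<in> V" and w: "w \<in> V" and mx: "m x = 0"
  shows "(\<Sum>y\<in>V. if (u,w) = (x,y) \<or> (u,w) = (y,x) then k * m y else 0) =
     (if w = x then k * m u else 0) + (if u = x then k * m w else 0)"
proof (cases "u = x")
  case True
  then show ?thesis
  proof (cases "w = x")
    case True
    have "(\<Sum>y\<in>V. if (u,w) = (x,y) \<or> (u,w) = (y,x) then k * m y else 0) = (\<Sum>y\<in>V. if y = x then k * m y else 0)"
      using \<open>u = x\<close> True by (intro sum.cong) auto
    with \<open>u = x\<close> True show ?thesis using u mx by (simp add: sum.delta finV)
  next
    case False
    with \<open>u = x\<close> have "\<And>y. ((u,w) = (x,y) \<or> (u,w) = (y,x)) = (y = w)" by auto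
    then show ?thesis using w False \<open>u = x\<close> by (simp add: sum.delta finV)
  qed
next
  case False
  then show ?thesis
  proof (cases "w = x")
    case True
    with \<open>u \<noteq> x\<close> have "\<And>y. ((u,w) = (x,y) \<or> (u,w) = (y,x)) = (y = u)" by auto
    then show ?thesis using u True \<open>u \<noteq> x\<close> by (simp add: sum.delta finV)
  next
    case False
    with \<open>u \<noteq> x\<close> have "\<And>y. ((u,w) = (x,y) \<or> (u,w) = (y,x)) = False" by auto
    then show ?thesis using False \<open>u \<noteq> x\<close> by simp
  qed
qed

lemma cd_sum_edges:
  fixes m :: "'v \<Rightarrow> real"
  assumes mx: "m x = 0"
  shows "(\<Sum>y\<in>V. cd x y * m y) = (\<Sum>e\<in>E. (if snd (ends e) = x then c e * m (fst (ends e)) else 0)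
      + (if fst (ends e) = x then c e * m (snd (ends e)) else 0))"
proof -
  have "(\<Sum>y\<in>V. cd x y * m y) = (\<Sum>y\<in>V. \<Sum>e\<in>E. if ends e = (x,y) \<or> ends e = (y,x) then c e * m y else 0)"
    unfolding cond_def sum_distrib_right by (simp add: sum.inter_filter finE)
  also have "\<dots> = (\<Sum>e\<in>E. \<Sum>y\<in>V. if ends e = (x,y) \<or> ends e = (y,x) then c e * m y else 0)"
    by (rule sum.swap)
  also have "\<dots> = (\<Sum>e\<in>E. (if snd (ends e) = x then c e * m (fst (ends e)) else 0)
      + (if fst (ends e) = x then c e * m (snd (ends e)) else 0))"
  proof (intro sum.cong refl)
    fix e assume e: "e \<in> E"
    show "(\<Sum>y\<in>V. if ends e = (x,y) \<or> ends e = (y,x) then c e * m y else 0) =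
      (if snd (ends e) = x then c e * m (fst (ends e)) else 0)
      + (if fst (ends e) = x then c e * m (snd (ends e)) else 0)"
      using edge_sum_one[of "fst (ends e)" "snd (ends e)" m x "c e"] endsV e mx by simp
  qed
  finally show ?thesis .
qed

lemma dart_sum:
  "(\<Sum>d\<in>{d \<in> E \<times> UNIV. P d}. g d) = (\<Sum>e\<in>E. (if P (e,True) then g (e,True) else 0) + (if P (e,False) then g (e,False) else 0))"
proof -
  have "(\<Sum>d\<in>{d \<in> E \<times> UNIV. P d}. g d) = (\<Sum>d\<in>E \<times> UNIV. if P d then g d else 0)"
    by (simp add: sum.inter_filter[symmetric] finE)
  also have "\<dots> = (\<Sum>e\<in>E. \<Sum>b\<in>UNIV. if P (e,b) then g (e,b) else 0)"
    by (subst sum.cartesian_product) (simp add: case_prod_unfold cong: if_cong)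
  also have "\<dots> = (\<Sum>e\<in>E. (if P (e,True) then g (e,True) else 0) + (if P (e,False) then g (e,False) else 0))"
    by (simp add: UNIV_bool add.commute)
  finally show ?thesis .
qed

lemma seg_length_eq: "seg_length E ends c h x = (\<Sum>y\<in>V. cd x y * max 0 (h x - h y))"
  unfolding seg_length_def dart_sum
  by (subst cd_sum_edges[where m="\<lambda>y. max 0 (h x - h y)"]) (auto intro!: sum.cong simp: harm_oriented_def dhead_def dtail_def grad_def max_def)

lemma eta_eq: "eta E ends c h v0 = (\<Sum>y\<in>V. cd v0 y * max 0 (h y - h v0))"
  unfolding eta_def dart_sum
  by (subst cd_sum_edges[where m="\<lambda>y. max 0 (h y - h v0)"]) (auto intro!: sum.cong simp: harm_oriented_def dhead_def dtail_def grad_def max_def)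

end



context LG begin

definition "Dv x = (\<Sum>y\<in>V. cd x y * (h y - h x))"

lemma st_eq: "st x = (\<Sum>y\<in>V. cd x y)" unfolding stat_def ..

lemma st_zero_cd: assumes "st x = 0" "y \<in> V" shows "cd x y = 0"
  using assms sum_nonneg_eq_0_iff[OF finV, of "cd x"] cd_nonneg unfolding st_eq by blast

lemma harm_sum: assumes "x \<in> V - {v0, v1}" "st x \<noteq> 0"
  shows "(\<Sum>y\<in>V. cd x y * h y) = h x * st x"
proof -
  have "h x = (\<Sum>y\<in>V. cd x y * h y) / st x"
    using harm[OF assms(1)] unfolding trans_def by (simp add: sum_divide_distrib)
  then show ?thesis using assms(2) by (simp add: field_simps)
qed

lemma Dv_zero: assumes "x \<in> V - {v0, v1}" shows "Dv x = 0"
proof (cases "st x = 0")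
  case True
  then show ?thesis unfolding Dv_def using st_zero_cd[OF True] by simp
next
  case False
  have "Dv x = (\<Sum>y\<in>V. cd x y * h y) - h x * (\<Sum>y\<in>V. cd x y)"
    unfolding Dv_def by (simp add: algebra_simps sum_subtractf sum_distrib_left)
  then show ?thesis using harm_sum[OF assms False] by (simp add: st_eq)
qed

lemma st_zero_h: assumes "x \<in> V - {v0, v1}" "st x = 0" shows "h x = 0"
  using harm[OF assms(1)] assms(2) unfolding trans_def by simp

lemma st_pos: assumes "x \<in> V" "0 < h x" "h x < 1" shows "st x > 0"
proof -
  have "x \<in> V - {v0, v1}" using assms hv0 hv1 by auto
  then have "st x \<noteq> 0" using st_zero_h assms by force
  then show ?thesis using st_nonneg[of x] by simp
qed

lemma h_nonneg: assumes "y \<in> V" shows "h y \<ge> 0"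
proof (rule ccontr)
  assume "\<not> h y \<ge> 0"
  define z where "z = (SOME z. z \<in> V \<and> h z = Min (h ` V))"
  have "Min (h ` V) \<in> h ` V" using finV assms by (intro Min_in) auto
  then have "\<exists>z. z \<in> V \<and> h z = Min (h ` V)" by auto
  then have z: "z \<in> V" "h z = Min (h ` V)" unfolding z_def by (metis (mono_tags, lifting) someI_ex)+
  have zle: "\<And>w. w \<in> V \<Longrightarrow> h z \<le> h w" using z finV by auto
  have hz: "h z < 0" using zle[OF assms] \<open>\<not> h y \<ge> 0\<close> by simp
  have zV: "z \<in> V - {v0, v1}" using z hz hv0 hv1 by auto
  have "st z \<noteq> 0" using st_zero_h[OF zV] hz by auto
  have "\<exists>w\<in>V. cd z w \<noteq> 0"
  proof (rule ccontr)
    assume "\<not> (\<exists>w\<in>V. cd z w \<noteq> 0)"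
    then have "st z = 0" unfolding st_eq by (auto intro!: sum.neutral)
    then show False using \<open>st z \<noteq> 0\<close> by simp
  qed
  then obtain w where w: "w \<in> V" "cd z w \<noteq> 0" by blast
  have "Dv z = 0" by (rule Dv_zero[OF zV])
  moreover have "\<forall>w\<in>V. 0 \<le> cd z w * (h w - h z)" using zle cd_nonneg by auto
  ultimately have "\<forall>w\<in>V. cd z w * (h w - h z) = 0"
    unfolding Dv_def using sum_nonneg_eq_0_iff[OF finV, of "\<lambda>w. cd z w * (h w - h z)"] by simp
  then have "h w = h z" using w by auto
  then show False using cd_neq[OF w(2)] by simp
qed

lemma eta_Dv: "eta E ends c h v0 = Dv v0"
  unfolding eta_eq Dv_def using h_nonneg hv0 by (intro sum.cong refl) auto

lemma flow:
  assumes b: "0 < b" "b < 1" and bz: "bz \<in> V" "h bz = b"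
  shows "(\<Sum>y\<in>V. if h y = b then seg_length E ends c h y else 0) = eta E ends c h v0"
proof -
  define S where "S = {x\<in>V. h x < b}"
  define T where "T = V - S"
  define f where "f x y = cd x y * (h y - h x)" for x y
  have finS: "finite S" and finT: "finite T" using finV unfolding S_def T_def by auto
  have v0S: "v0 \<in> S" using v0V hv0 b unfolding S_def by auto
  have v1S: "v1 \<notin> S" using hv1 b unfolding S_def by auto
  have VST: "V = S \<union> T" "S \<inter> T = {}" unfolding S_def T_def by auto
  have "(\<Sum>x\<in>S. Dv x) = Dv v0 + (\<Sum>x\<in>S - {v0}. Dv x)"
    using finS v0S by (simp add: sum.remove)
  also have "(\<Sum>x\<in>S - {v0}. Dv x) = 0"
    using v1S by (intro sum.neutral) (auto intro!: Dv_zero simp: S_def)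
  finally have sumS: "(\<Sum>x\<in>S. Dv x) = Dv v0" by simp
  have "(\<Sum>x\<in>S. Dv x) = (\<Sum>x\<in>S. \<Sum>y\<in>S. f x y) + (\<Sum>x\<in>S. \<Sum>y\<in>T. f x y)"
    unfolding Dv_def f_def by (subst VST(1), subst sum.union_disjoint) (use finS finT VST(2) in \<open>auto simp: sum.distrib\<close>)
  moreover have "(\<Sum>x\<in>S. \<Sum>y\<in>S. f x y) = 0"
  proof -
    have fs: "f y x = - f x y" for x y unfolding f_def by (simp add: cd_sym algebra_simps)
    have "(\<Sum>x\<in>S. \<Sum>y\<in>S. f x y) = (\<Sum>y\<in>S. \<Sum>x\<in>S. f x y)" by (rule sum.swap)
    also have "\<dots> = (\<Sum>y\<in>S. \<Sum>x\<in>S. - f y x)" by (intro sum.cong refl) (rule fs)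
    also have "\<dots> = - (\<Sum>y\<in>S. \<Sum>x\<in>S. f y x)" by (simp add: sum_negf)
    finally show ?thesis by simp
  qed
  moreover have "(\<Sum>x\<in>S. \<Sum>y\<in>T. f x y) = (\<Sum>y\<in>V. if h y = b then seg_length E ends c h y else 0)"
  proof -
    have "(\<Sum>x\<in>S. \<Sum>y\<in>T. f x y) = (\<Sum>y\<in>T. \<Sum>x\<in>S. f x y)" by (rule sum.swap)
    also have "\<dots> = (\<Sum>y\<in>T. if h y = b then seg_length E ends c h y else 0)"
    proof (intro sum.cong refl)
      fix y assume y: "y \<in> T"
      then have yV: "y \<in> V" and hy: "h y \<ge> b" unfolding T_def S_def by auto
      show "(\<Sum>x\<in>S. f x y) = (if h y = b then seg_length E ends c h y else 0)"
      proof (cases "h y = b")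
        case True
        have "seg_length E ends c h y = (\<Sum>x\<in>S. cd y x * max 0 (h y - h x)) + (\<Sum>x\<in>T. cd y x * max 0 (h y - h x))"
          unfolding seg_length_eq by (subst VST(1), subst sum.union_disjoint) (use finS finT VST(2) in auto)
        also have "(\<Sum>x\<in>T. cd y x * max 0 (h y - h x)) = 0"
          using True by (intro sum.neutral) (auto simp: T_def S_def)
        also have "(\<Sum>x\<in>S. cd y x * max 0 (h y - h x)) = (\<Sum>x\<in>S. f x y)"
          using True unfolding f_def by (intro sum.cong refl) (auto simp: S_def cd_sym)
        finally show ?thesis using True by simp
      next
        case False
        then have hy': "h y > b" using hy by simp
        have "f x y = 0" if x: "x \<in> S" for x
        proof (rule ccontr)
          assume "f x y \<noteq> 0"
          then have "cd x y \<noteq> 0" unfolding f_def by auto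
          moreover have "h x < h bz" using x bz unfolding S_def by auto
          ultimately show False using cd_noskip[of x y bz] bz hy' by auto
        qed
        then show ?thesis using False by simp
      qed
    qed
    also have "\<dots> = (\<Sum>y\<in>V. if h y = b then seg_length E ends c h y else 0)"
      by (subst VST(1), subst sum.union_disjoint) (use finS finT VST(2) in \<open>auto simp: S_def intro!: sum.neutral\<close>)
    finally show ?thesis .
  qed
  ultimately show ?thesis using sumS eta_Dv by simp
qed

end



context LG begin

definition "du b = Min ((\<lambda>z. h z - b) ` {z\<in>V. h z > b})"
definition "dd b = Min ((\<lambda>z. b - h z) ` {z\<in>V. h z < b})"
definition "Q b b' = (if b' = b + du b then dd b / (du b + dd b)
                      else if b' = b - dd b then du b / (du b + dd b) else 0)"

lemma du_props:
  assumes "b < 1"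
  shows "du b > 0" "\<exists>z\<in>V. h z = b + du b" "\<And>z. z \<in> V \<Longrightarrow> h z > b \<Longrightarrow> h z \<ge> b + du b"
proof -
  let ?A = "(\<lambda>z. h z - b) ` {z\<in>V. h z > b}"
  have fin: "finite ?A" using finV by auto
  have ne: "?A \<noteq> {}" using v1V hv1 assms by auto
  have "Min ?A \<in> ?A" using fin ne by (rule Min_in)
  then obtain z where z: "z \<in> V" "h z > b" "du b = h z - b" unfolding du_def by auto
  then show "du b > 0" by simp
  show "\<exists>z\<in>V. h z = b + du b" using z by auto
  fix w assume "w \<in> V" "h w > b"
  then have "Min ?A \<le> h w - b" using fin by (intro Min_le) auto
  then show "h w \<ge> b + du b" unfolding du_def by simp
qed

lemma dd_props:
  assumes "0 < b"
  shows "dd b > 0" "\<exists>z\<in>V. h z = b - dd b" "\<And>z. z \<in> V \<Longrightarrow> h z < b \<Longrightarrow> h z \<le> b - dd b"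
proof -
  let ?A = "(\<lambda>z. b - h z) ` {z\<in>V. h z < b}"
  have fin: "finite ?A" using finV by auto
  have ne: "?A \<noteq> {}" using v0V hv0 assms by auto
  have "Min ?A \<in> ?A" using fin ne by (rule Min_in)
  then obtain z where z: "z \<in> V" "h z < b" "dd b = b - h z" unfolding dd_def by auto
  then show "dd b > 0" by simp
  show "\<exists>z\<in>V. h z = b - dd b" using z by auto
  fix w assume "w \<in> V" "h w < b"
  then have "Min ?A \<le> b - h w" using fin by (intro Min_le) auto
  then show "h w \<le> b - dd b" unfolding dd_def by simp
qed

lemma cd_in: assumes "cd x y \<noteq> 0" shows "x \<in> V" "y \<in> V"
  using cd_edge[OF assms] endsV by (metis fst_conv snd_conv)+

lemma nbr:
  assumes x: "x \<in> V" "0 < h x" "h x < 1" and cxy: "cd x y \<noteq> 0"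
  shows "(h y > h x \<and> h y = h x + du (h x)) \<or> (h y < h x \<and> h y = h x - dd (h x))"
proof -
  have yV: "y \<in> V" using cd_in[OF cxy] by simp
  have "h y \<noteq> h x" using cd_neq[OF cxy] by simp
  then consider "h y > h x" | "h y < h x" by linarith
  then show ?thesis
  proof cases
    case 1
    have ge: "h y \<ge> h x + du (h x)" using du_props(3)[OF x(3) yV 1] .
    obtain z where z: "z \<in> V" "h z = h x + du (h x)" using du_props(2)[OF x(3)] by blast
    have "\<not> h y > h x + du (h x)"
    proof
      assume "h y > h x + du (h x)"
      then show False using cd_noskip[OF cxy z(1)] z du_props(1)[OF x(3)] by auto
    qed
    then show ?thesis using ge 1 by auto
  next
    case 2
    have ge: "h y \<le> h x - dd (h x)" using dd_props(3)[OF x(2) yV 2] .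
    obtain z where z: "z \<in> V" "h z = h x - dd (h x)" using dd_props(2)[OF x(2)] by blast
    have "\<not> h y < h x - dd (h x)"
    proof
      assume "h y < h x - dd (h x)"
      then show False using cd_noskip[of y x z] cxy cd_sym z dd_props(1)[OF x(2)] by auto
    qed
    then show ?thesis using ge 2 by auto
  qed
qed

lemma adj_up:
  assumes b: "0 < b" "b < 1" and bz: "bz \<in> V" "h bz = b" and b': "b' = b + du b"
  shows "b = b' - dd b'"
proof -
  have b'pos: "0 < b'" using b' du_props(1)[OF b(2)] b by simp
  have "b \<le> b' - dd b'" using dd_props(3)[OF b'pos bz(1)] bz b' du_props(1)[OF b(2)] by simp
  moreover have "\<not> b < b' - dd b'"
  proof
    assume lt: "b < b' - dd b'"
    obtain w where w: "w \<in> V" "h w = b' - dd b'" using dd_props(2)[OF b'pos] by blast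
    have "h w \<ge> b + du b" using du_props(3)[OF b(2) w(1)] w lt by simp
    then show False using w b' dd_props(1)[OF b'pos] by simp
  qed
  ultimately show ?thesis by simp
qed

lemma adj_down:
  assumes b: "0 < b" "b < 1" and bz: "bz \<in> V" "h bz = b" and b': "b' = b - dd b"
  shows "b = b' + du b'"
proof -
  have b'1: "b' < 1" using b' dd_props(1)[OF b(1)] b by simp
  have "b \<ge> b' + du b'" using du_props(3)[OF b'1 bz(1)] bz b' dd_props(1)[OF b(1)] by simp
  moreover have "\<not> b > b' + du b'"
  proof
    assume lt: "b > b' + du b'"
    obtain w where w: "w \<in> V" "h w = b' + du b'" using du_props(2)[OF b'1] by blast
    have "h w \<le> b - dd b" using dd_props(3)[OF b(1) w(1)] w lt by simp
    then show False using w b' du_props(1)[OF b'1] by simp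
  qed
  ultimately show ?thesis by simp
qed

definition "Cu x = (\<Sum>y\<in>V. if h y > h x then cd x y else 0)"
definition "Cd x = (\<Sum>y\<in>V. if h y < h x then cd x y else 0)"

lemma st_split: "st x = Cu x + Cd x"
  unfolding st_eq Cu_def Cd_def sum.distrib[symmetric]
  by (intro sum.cong refl) (use cd_neq in force)

lemma seg_Cd: assumes x: "x \<in> V" "0 < h x" "h x < 1"
  shows "seg_length E ends c h x = dd (h x) * Cd x"
  unfolding seg_length_eq Cd_def sum_distrib_left
proof (intro sum.cong refl)
  fix y assume "y \<in> V"
  show "cd x y * max 0 (h x - h y) = dd (h x) * (if h y < h x then cd x y else 0)"
    using nbr[OF x, of y] by (cases "cd x y = 0") auto
qed

definition "Up x = (\<Sum>y\<in>V. cd x y * max 0 (h y - h x))"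

lemma Up_Cu: assumes x: "x \<in> V" "0 < h x" "h x < 1"
  shows "Up x = du (h x) * Cu x"
  unfolding Up_def Cu_def sum_distrib_left
proof (intro sum.cong refl)
  fix y assume "y \<in> V"
  show "cd x y * max 0 (h y - h x) = du (h x) * (if h y > h x then cd x y else 0)"
    using nbr[OF x, of y] by (cases "cd x y = 0") auto
qed

lemma Up_seg: assumes x: "x \<in> V" "0 < h x" "h x < 1"
  shows "Up x = seg_length E ends c h x"
proof -
  have xV: "x \<in> V - {v0, v1}" using x hv0 hv1 by auto
  have "Dv x = Up x - seg_length E ends c h x"
    unfolding Dv_def Up_def seg_length_eq sum_subtractf[symmetric]
    by (intro sum.cong refl) (simp add: max_def algebra_simps)
  then show ?thesis using Dv_zero[OF xV] by simp
qed

lemma balance: assumes x: "x \<in> V" "0 < h x" "h x < 1"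
  shows "du (h x) * Cu x = dd (h x) * Cd x"
  using Up_seg[OF x] Up_Cu[OF x] seg_Cd[OF x] by simp

lemma seg_st: assumes x: "x \<in> V" "0 < h x" "h x < 1"
  shows "seg_length E ends c h x / st x = du (h x) * dd (h x) / (du (h x) + dd (h x))"
proof -
  have u: "du (h x) > 0" using du_props(1) x by simp
  have d: "dd (h x) > 0" using dd_props(1) x by simp
  have s: "st x > 0" using st_pos[OF x] .
  have "seg_length E ends c h x * (du (h x) + dd (h x)) = du (h x) * dd (h x) * st x"
    using balance[OF x] seg_Cd[OF x] st_split[of x]
    by (simp add: algebra_simps)
  then show ?thesis using u d s by (simp add: field_simps)
qed

end



context LG begin

lemma trans_level:
  assumes x: "x \<in> V" "0 < h x" "h x < 1"
  shows "(\<Sum>y\<in>V. if h y = b' then p x y else 0) = Q (h x) b'"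
proof -
  define a where "a = h x"
  have u: "du a > 0" using du_props(1) x unfolding a_def by simp
  have d: "dd a > 0" using dd_props(1) x unfolding a_def by simp
  have s: "st x > 0" using st_pos[OF x] .
  have bal: "du a * Cu x = dd a * Cd x" using balance[OF x] unfolding a_def .
  have st: "st x = Cu x + Cd x" by (rule st_split)
  have nb: "\<And>y. cd x y \<noteq> 0 \<Longrightarrow> (h y > a \<and> h y = a + du a) \<or> (h y < a \<and> h y = a - dd a)"
    using nbr[OF x] unfolding a_def by blast
  have eq1: "(\<Sum>y\<in>V. if h y = b' then p x y else 0) = (\<Sum>y\<in>V. if h y = b' then cd x y else 0) / st x"
    unfolding trans_def sum_divide_distrib by (intro sum.cong refl) auto
  consider "b' = a + du a" | "b' \<noteq> a + du a" "b' = a - dd a" | "b' \<noteq> a + du a" "b' \<noteq> a - dd a" by blast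
  then show ?thesis
  proof cases
    case 1
    have "(\<Sum>y\<in>V. if h y = b' then cd x y else 0) = Cu x"
      unfolding Cu_def a_def[symmetric]
    proof (intro sum.cong refl)
      fix y assume "y \<in> V"
      show "(if h y = b' then cd x y else 0) = (if h y > a then cd x y else 0)"
        using nb[of y] 1 u d by (cases "cd x y = 0") auto
    qed
    moreover have "Cu x / st x = dd a / (du a + dd a)"
      using s u d bal unfolding st by (simp add: frac_eq_eq algebra_simps)
    ultimately show ?thesis using 1 eq1 unfolding Q_def a_def by simp
  next
    case 2
    have "(\<Sum>y\<in>V. if h y = b' then cd x y else 0) = Cd x"
      unfolding Cd_def a_def[symmetric]
    proof (intro sum.cong refl)
      fix y assume "y \<in> V"
      show "(if h y = b' then cd x y else 0) = (if h y < a then cd x y else 0)"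
        using nb[of y] 2 u d by (cases "cd x y = 0") auto
    qed
    moreover have "Cd x / st x = du a / (du a + dd a)"
      using s u d bal unfolding st by (simp add: frac_eq_eq algebra_simps)
    ultimately show ?thesis using 2 eq1 unfolding Q_def a_def by simp
  next
    case 3
    have "(\<Sum>y\<in>V. if h y = b' then cd x y else 0) = 0"
      by (intro sum.neutral) (use nb 3 in force)
    then show ?thesis using 3 eq1 unfolding Q_def a_def by simp
  qed
qed

abbreviation "\<mu> \<equiv> mu V E ends c h v0"

lemma mu_level:
  assumes b: "0 < b" "b < 1" and bz: "bz \<in> V" "h bz = b"
    and y: "y \<in> V" "h y = b'" and b': "0 < b'" "b' < 1"
  shows "(\<Sum>x\<in>V. \<mu> b x * p x y) = Q b b' * \<mu> b' y"
proof -
  define K where "K = du b * dd b / (du b + dd b)"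
  define G where "G = (\<Sum>x\<in>V. if h x = b then cd y x else 0)"
  let ?eta = "eta E ends c h v0"
  have yy: "y \<in> V" "0 < h y" "h y < 1" using y b' by auto
  have "(\<Sum>x\<in>V. \<mu> b x * p x y) = (\<Sum>x\<in>V. K / ?eta * (if h x = b then cd y x else 0))"
  proof (intro sum.cong refl)
    fix x assume xV: "x \<in> V"
    show "\<mu> b x * p x y = K / ?eta * (if h x = b then cd y x else 0)"
    proof (cases "h x = b")
      case True
      have "seg_length E ends c h x / st x = K"
        using seg_st[of x] xV True b unfolding K_def by simp
      moreover have "st x > 0" using st_pos[of x] xV True b by simp
      ultimately have "seg_length E ends c h x = K * st x" by (simp add: field_simps)
      then show ?thesis using True xV \<open>st x > 0\<close>
        by (simp add: mu_def trans_def cd_sym field_simps)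
    qed (simp add: mu_def)
  qed
  also have "\<dots> = K / ?eta * G" unfolding G_def sum_distrib_left ..
  finally have lhs: "(\<Sum>x\<in>V. \<mu> b x * p x y) = K / ?eta * G" .
  have nb: "\<And>x. cd y x \<noteq> 0 \<Longrightarrow> (h x > b' \<and> h x = b' + du b') \<or> (h x < b' \<and> h x = b' - dd b')"
    using nbr[OF yy] y by blast
  have mub': "\<mu> b' y = seg_length E ends c h y / ?eta" using y by (simp add: mu_def)
  consider "b' = b + du b" | "b' \<noteq> b + du b" "b' = b - dd b" | "b' \<noteq> b + du b" "b' \<noteq> b - dd b" by blast
  then show ?thesis
  proof cases
    case 1
    have bb: "b = b' - dd b'" using adj_up[OF b bz 1] .
    have dd': "dd b' = du b" using bb 1 by simp
    have "G = Cd y"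
      unfolding G_def Cd_def
    proof (intro sum.cong refl)
      fix x assume "x \<in> V"
      show "(if h x = b then cd y x else 0) = (if h x < h y then cd y x else 0)"
        using nb[of x] bb y dd_props(1)[OF b'(1)] du_props(1)[OF b'(2)] by (cases "cd y x = 0") auto
    qed
    moreover have "seg_length E ends c h y = dd b' * Cd y" using seg_Cd[OF yy] y by simp
    ultimately have "G = seg_length E ends c h y / du b" using dd' du_props(1)[OF b(2)] by simp
    then show ?thesis using lhs mub' 1 du_props(1)[OF b(2)] dd_props(1)[OF b(1)]
      unfolding Q_def K_def by (simp add: field_simps)
  next
    case 2
    have bb: "b = b' + du b'" using adj_down[OF b bz 2(2)] .
    have du': "du b' = dd b" using bb 2 by simp
    have "G = Cu y"
      unfolding G_def Cu_def
    proof (intro sum.cong refl)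
      fix x assume "x \<in> V"
      show "(if h x = b then cd y x else 0) = (if h x > h y then cd y x else 0)"
        using nb[of x] bb y dd_props(1)[OF b'(1)] du_props(1)[OF b'(2)] by (cases "cd y x = 0") auto
    qed
    moreover have "seg_length E ends c h y = du b' * Cu y" using Up_Cu[OF yy] Up_seg[OF yy] y by simp
    ultimately have Gv: "G = seg_length E ends c h y / dd b" using du' dd_props(1)[OF b(1)] by simp
    have Qv: "Q b b' = du b / (du b + dd b)" using 2 unfolding Q_def by simp
    show ?thesis unfolding lhs Qv mub' Gv K_def using du_props(1)[OF b(2)] dd_props(1)[OF b(1)]
      by (cases "?eta = 0") (simp_all add: field_simps)
  next
    case 3
    have "G = 0" unfolding G_def
    proof (intro sum.neutral ballI)
      fix x assume xV: "x \<in> V"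
      show "(if h x = b then cd y x else 0) = 0"
      proof (rule ccontr)
        assume ne: "(if h x = b then cd y x else 0) \<noteq> 0"
        then have hx: "h x = b" and cne: "cd y x \<noteq> 0" by (auto split: if_splits)
        from nb[OF cne] show False
        proof
          assume "h x > b' \<and> h x = b' + du b'"
          then have "b = b' + du b'" using hx by simp
          then have "b' = b - dd b" using adj_up[OF b' y(1) y(2)] by simp
          then show False using 3 by simp
        next
          assume "h x < b' \<and> h x = b' - dd b'"
          then have "b = b' - dd b'" using hx by simp
          then have "b' = b + du b" using adj_down[OF b' y(1) y(2)] by simp
          then show False using 3 by simp
        qed
      qed
    qed
    then show ?thesis using lhs 3 unfolding Q_def by simp
  qed
qed

end



lemma ball_shift: "(\<forall>n\<in>{1..Suc N}. P n) = (P 1 \<and> (\<forall>n\<in>{1..N}. P (Suc n)))"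
proof
  assume "\<forall>n\<in>{1..Suc N}. P n" then show "P 1 \<and> (\<forall>n\<in>{1..N}. P (Suc n))" by auto
next
  assume a: "P 1 \<and> (\<forall>n\<in>{1..N}. P (Suc n))"
  show "\<forall>n\<in>{1..Suc N}. P n"
  proof
    fix n assume n: "n \<in> {1..Suc N}"
    show "P n"
    proof (cases n)
      case 0 then show ?thesis using n by simp
    next
      case (Suc m) then show ?thesis using a n by (cases m) auto
    qed
  qed
qed

context LG begin

lemma I1:
  assumes "\<forall>n\<le>N. 0 < as n \<and> as n < 1" "\<forall>x\<in>V. init x \<noteq> 0 \<longrightarrow> h x = as 0"
  shows "walk_prob V E ends c init N (\<lambda>xs. \<forall>n\<in>{1..N}. h (xs ! n) = as n)
       = (\<Sum>x\<in>V. init x) * (\<Prod>n<N. Q (as n) (as (Suc n)))"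
  using assms
proof (induction N arbitrary: init as)
  case 0
  then show ?case by (simp add: walk_prob_0[OF finV])
next
  case (Suc N)
  define init' where "init' y = (if h y = as 1 then (\<Sum>x\<in>V. if True then init x * p x y else 0) else 0)" for y
  have "walk_prob V E ends c init (Suc N) (\<lambda>xs. \<forall>n\<in>{1..Suc N}. h (xs ! n) = as n) =
    walk_prob V E ends c (\<lambda>y. \<Sum>x\<in>V. if True then init x * p x y else 0) N
      (\<lambda>ys. h (ys ! 0) = as 1 \<and> (\<forall>n\<in>{1..N}. h (ys ! n) = as (Suc n)))"
    by (rule walk_prob_Suc[OF finV]) (unfold ball_shift, simp)
  also have "\<dots> = walk_prob V E ends c init' N (\<lambda>ys. \<forall>n\<in>{1..N}. h (ys ! n) = as (Suc n))"
    unfolding init'_def by (rule walk_prob_first[OF finV])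
  also have "\<dots> = (\<Sum>y\<in>V. init' y) * (\<Prod>n<N. Q (as (Suc n)) (as (Suc (Suc n))))"
  proof -
    have p1: "\<forall>n\<le>N. 0 < as (Suc n) \<and> as (Suc n) < 1" using Suc.prems(1) by auto
    have p2: "\<forall>x\<in>V. init' x \<noteq> 0 \<longrightarrow> h x = as (Suc 0)" unfolding init'_def by auto
    show ?thesis using Suc.IH[OF p1 p2] by simp
  qed
  also have "(\<Sum>y\<in>V. init' y) = (\<Sum>x\<in>V. init x * Q (as 0) (as 1))"
  proof -
    have "(\<Sum>y\<in>V. init' y) = (\<Sum>y\<in>V. \<Sum>x\<in>V. init x * (if h y = as 1 then p x y else 0))"
      unfolding init'_def by (intro sum.cong refl) (auto)
    also have "\<dots> = (\<Sum>x\<in>V. init x * (\<Sum>y\<in>V. if h y = as 1 then p x y else 0))"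
      by (subst sum.swap) (simp add: sum_distrib_left)
    also have "\<dots> = (\<Sum>x\<in>V. init x * Q (as 0) (as 1))"
    proof (intro sum.cong refl)
      fix x assume x: "x \<in> V"
      show "init x * (\<Sum>y\<in>V. if h y = as 1 then p x y else 0) = init x * Q (as 0) (as 1)"
      proof (cases "init x = 0")
        case False
        then have "h x = as 0" using Suc.prems x by auto
        moreover have "0 < as 0" "as 0 < 1" using Suc.prems by auto
        ultimately show ?thesis using trans_level[of x "as 1"] x by simp
      qed simp
    qed
    finally show ?thesis .
  qed
  also have "(\<Sum>x\<in>V. init x * Q (as 0) (as 1)) = (\<Sum>x\<in>V. init x) * Q (as 0) (as 1)"
    by (simp add: sum_distrib_right)
  finally show ?case
    unfolding prod.lessThan_Suc_shift by (simp only: mult.assoc One_nat_def)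
qed

lemma I2:
  assumes "\<forall>n\<le>N. 0 < as n \<and> as n < 1 \<and> (\<exists>z\<in>V. h z = as n)" "i \<le> N" "x \<in> V"
  shows "walk_prob V E ends c (\<lambda>y. C * \<mu> (as 0) y) N (\<lambda>xs. xs ! i = x \<and> (\<forall>n\<in>{1..N}. h (xs ! n) = as n))
       = C * \<mu> (as i) x * (\<Prod>n<N. Q (as n) (as (Suc n)))"
  using assms
proof (induction i arbitrary: N C as)
  case 0
  have "walk_prob V E ends c (\<lambda>y. C * \<mu> (as 0) y) N (\<lambda>xs. xs ! 0 = x \<and> (\<forall>n\<in>{1..N}. h (xs ! n) = as n))
     = walk_prob V E ends c (\<lambda>y. if y = x then C * \<mu> (as 0) y else 0) N (\<lambda>xs. \<forall>n\<in>{1..N}. h (xs ! n) = as n)"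
    by (rule walk_prob_first[OF finV])
  also have "\<dots> = (\<Sum>y\<in>V. if y = x then C * \<mu> (as 0) y else 0) * (\<Prod>n<N. Q (as n) (as (Suc n)))"
    by (rule I1) (use 0 in \<open>auto simp: mu_def split: if_splits\<close>)
  also have "(\<Sum>y\<in>V. if y = x then C * \<mu> (as 0) y else 0) = C * \<mu> (as 0) x"
    using 0 finV by simp
  finally show ?case by simp
next
  case (Suc i)
  then obtain N' where N: "N = Suc N'" by (cases N) auto
  have pr: "\<forall>n\<le>N'. 0 < as (Suc n) \<and> as (Suc n) < 1 \<and> (\<exists>z\<in>V. h z = as (Suc n))"
    using Suc.prems N by auto
  have a0: "0 < as 0" "as 0 < 1" "\<exists>z\<in>V. h z = as 0" and a1: "0 < as 1" "as 1 < 1"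
    using Suc.prems N by auto
  obtain z0 where z0: "z0 \<in> V" "h z0 = as 0" using a0 by blast
  define C' where "C' = C * Q (as 0) (as 1)"
  have "walk_prob V E ends c (\<lambda>y. C * \<mu> (as 0) y) (Suc N') (\<lambda>xs. xs ! Suc i = x \<and> (\<forall>n\<in>{1..Suc N'}. h (xs ! n) = as n))
    = walk_prob V E ends c (\<lambda>y. \<Sum>x'\<in>V. if True then C * \<mu> (as 0) x' * p x' y else 0) N'
      (\<lambda>ys. h (ys ! 0) = as 1 \<and> (ys ! i = x \<and> (\<forall>n\<in>{1..N'}. h (ys ! n) = as (Suc n))))"
    by (rule walk_prob_Suc[OF finV]) (unfold ball_shift, auto)
  also have "\<dots> = walk_prob V E ends c (\<lambda>y. if h y = as 1 then (\<Sum>x'\<in>V. if True then C * \<mu> (as 0) x' * p x' y else 0) else 0) N'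
      (\<lambda>ys. ys ! i = x \<and> (\<forall>n\<in>{1..N'}. h (ys ! n) = as (Suc n)))"
    by (rule walk_prob_first[OF finV])
  also have "\<dots> = walk_prob V E ends c (\<lambda>y. C' * \<mu> (as (Suc 0)) y) N'
      (\<lambda>ys. ys ! i = x \<and> (\<forall>n\<in>{1..N'}. h (ys ! n) = as (Suc n)))"
  proof (rule walk_prob_cong)
    show "\<forall>y\<in>V. (if h y = as 1 then (\<Sum>x'\<in>V. if True then C * \<mu> (as 0) x' * p x' y else 0) else 0)
        = C' * \<mu> (as (Suc 0)) y"
    proof
      fix y assume y: "y \<in> V"
      show "(if h y = as 1 then (\<Sum>x'\<in>V. if True then C * \<mu> (as 0) x' * p x' y else 0) else 0)
        = C' * \<mu> (as (Suc 0)) y"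
      proof (cases "h y = as 1")
        case True
        have "(\<Sum>x'\<in>V. C * \<mu> (as 0) x' * p x' y) = C * (\<Sum>x'\<in>V. \<mu> (as 0) x' * p x' y)"
          by (simp add: sum_distrib_left mult_ac)
        also have "\<dots> = C * (Q (as 0) (as 1) * \<mu> (as 1) y)"
          using mu_level[OF a0(1,2) z0 y True a1] by simp
        finally show ?thesis using True unfolding C'_def by simp
      qed (simp add: mu_def)
    qed
  qed auto
  also have "\<dots> = C' * \<mu> (as (Suc i)) x * (\<Prod>n<N'. Q (as (Suc n)) (as (Suc (Suc n))))"
  proof -
    have iN: "i \<le> N'" using Suc.prems(2) N by simp
    show ?thesis using Suc.IH[OF pr iN Suc.prems(3), of C'] by simp
  qed
  finally show ?case unfolding N C'_def prod.lessThan_Suc_shift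
    by (simp only: mult.assoc One_nat_def) (simp only: mult.left_commute)
qed

end



theorem mainTheorem8:
  fixes V :: "'v set" and E :: "'e set" and ends :: "'e \<Rightarrow> 'v \<times> 'v"
    and c :: "'e \<Rightarrow> real" and v0 v1 :: 'v and h :: "'v \<Rightarrow> real"
    and a :: real and N :: nat and as :: "nat \<Rightarrow> real"
  assumes map: "doubly_marked_map V E ends c v0 v1"
    and volt: "is_voltage V E ends c v0 v1 h"
    and levels_vertices: "\<forall>x\<in>V. \<forall>e\<in>E. \<forall>t::real. 0 < t \<and> t < 1 \<longrightarrow>
           (1 - t) * h (fst (ends e)) + t * h (snd (ends e)) \<noteq> h x"
    and a_range: "0 < a" "a < 1"
    and level_a_sub: "\<forall>e\<in>E. \<forall>t::real. 0 < t \<and> t < 1 \<longrightarrow>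
           (1 - t) * h (fst (ends e)) + t * h (snd (ends e)) \<noteq> a"
    and level_a_ne: "\<exists>x\<in>V. h x = a"
    and as0: "as 0 = a"
    and as_range: "\<forall>n\<le>N. 0 < as n \<and> as n < 1"
    and admissible: "\<forall>n<N.
           walk_prob V E ends c (mu V E ends c h v0 a) N
              (\<lambda>xs. h (xs ! Suc n) = as (Suc n) \<and> h (xs ! n) = as n)
           / walk_prob V E ends c (mu V E ends c h v0 a) N (\<lambda>xs. h (xs ! n) = as n) > 0"
  shows "\<forall>i\<le>N. \<forall>x\<in>V. h x = as i \<longrightarrow>
           walk_prob V E ends c (mu V E ends c h v0 a) N
              (\<lambda>xs. xs ! i = x \<and> (\<forall>n\<in>{1..N}. h (xs ! n) = as n))
           / walk_prob V E ends c (mu V E ends c h v0 a) N (\<lambda>xs. \<forall>n\<in>{1..N}. h (xs ! n) = as n)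
           = mu V E ends c h v0 (as i) x"
proof -
  interpret LG V E ends c v0 v1 h
  proof (unfold_locales)
    show "finite V" "finite E" "\<forall>e\<in>E. fst (ends e) \<in> V \<and> snd (ends e) \<in> V" "\<forall>e\<in>E. c e > 0" "v0 \<in> V" "v1 \<in> V"
      using map unfolding doubly_marked_map_def by blast+
  qed (use volt levels_vertices in blast)+
  have pathsV: "xs ! k \<in> V" if "xs \<in> walk_paths V N" "k \<le> N" for xs k
    using that unfolding walk_paths_def by (auto intro!: nth_mem[THEN subsetD[rotated]])
  have num_ne: "walk_prob V E ends c (\<mu> a) N
              (\<lambda>xs. h (xs ! Suc n) = as (Suc n) \<and> h (xs ! n) = as n) \<noteq> 0" if n: "n < N" for n
  proof
    let ?r = "walk_prob V E ends c (\<mu> a) N (\<lambda>xs. h (xs ! Suc n) = as (Suc n) \<and> h (xs ! n) = as n)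
           / walk_prob V E ends c (\<mu> a) N (\<lambda>xs. h (xs ! n) = as n)"
    assume z: "walk_prob V E ends c (\<mu> a) N (\<lambda>xs. h (xs ! Suc n) = as (Suc n) \<and> h (xs ! n) = as n) = 0"
    have "?r > 0" using admissible n by blast
    then show False unfolding z by simp
  qed
  have vert: "\<exists>z\<in>V. h z = as n" if n: "n \<le> N" for n
  proof (cases n)
    case 0 then show ?thesis using level_a_ne as0 by simp
  next
    case (Suc m)
    then have "m < N" using n by simp
    have "{xs \<in> walk_paths V N. h (xs ! Suc m) = as (Suc m) \<and> h (xs ! m) = as m} \<noteq> {}"
    proof
      assume "{xs \<in> walk_paths V N. h (xs ! Suc m) = as (Suc m) \<and> h (xs ! m) = as m} = {}"
      then have "walk_prob V E ends c (\<mu> a) N (\<lambda>xs. h (xs ! Suc m) = as (Suc m) \<and> h (xs ! m) = as m) = 0"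
        unfolding walk_prob_def by (simp only: sum.empty)
      then show False using num_ne[OF \<open>m < N\<close>] by simp
    qed
    then obtain xs where xs: "xs \<in> walk_paths V N" "h (xs ! Suc m) = as (Suc m)" by blast
    then show ?thesis using pathsV[OF xs(1), of "Suc m"] Suc n by blast
  qed
  have Qnz: "Q (as n) (as (Suc n)) \<noteq> 0" if n: "n < N" for n
  proof
    assume Q0: "Q (as n) (as (Suc n)) = 0"
    have "walk_prob V E ends c (\<mu> a) N
              (\<lambda>xs. h (xs ! Suc n) = as (Suc n) \<and> h (xs ! n) = as n) = 0"
      unfolding walk_prob_def
    proof (intro sum.neutral ballI)
      fix xs assume xs: "xs \<in> {xs \<in> walk_paths V N. h (xs ! Suc n) = as (Suc n) \<and> h (xs ! n) = as n}"
      define x y where "x = xs ! n" and "y = xs ! Suc n"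
      have xV: "x \<in> V" and yV: "y \<in> V" using pathsV xs n unfolding x_def y_def by auto
      have hx: "h x = as n" "0 < h x" "h x < 1" using xs as_range n unfolding x_def by auto
      have hy: "h y = as (Suc n)" using xs unfolding y_def by auto
      have "(\<Sum>y\<in>V. if h y = as (Suc n) then p x y else 0) = 0"
        using trans_level[OF xV hx(2,3), of "as (Suc n)"] Q0 hx(1) by simp
      moreover have "\<forall>y\<in>V. 0 \<le> (if h y = as (Suc n) then p x y else 0)" by (simp add: p_nonneg)
      ultimately have "\<forall>y\<in>V. (if h y = as (Suc n) then p x y else 0) = 0"
        using sum_nonneg_eq_0_iff[OF finV, of "\<lambda>y. if h y = as (Suc n) then p x y else 0"] by simp
      then have "p x y = 0" using yV hy by force
      then have "(\<Prod>k<N. p (xs ! k) (xs ! Suc k)) = 0"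
        using n unfolding x_def y_def by (intro prod_zero) auto
      then show "\<mu> a (xs ! 0) * (\<Prod>k<N. p (xs ! k) (xs ! Suc k)) = 0" by simp
    qed
    then show False using num_ne[OF n] by simp
  qed
  define P where "P = (\<Prod>n<N. Q (as n) (as (Suc n)))"
  have Pnz: "P \<noteq> 0" unfolding P_def using Qnz by (simp add: prod_zero_iff)
  have den: "walk_prob V E ends c (\<mu> a) N (\<lambda>xs. \<forall>n\<in>{1..N}. h (xs ! n) = as n) = (\<Sum>x\<in>V. \<mu> a x) * P"
    unfolding P_def by (rule I1) (use as_range as0 in \<open>auto simp: mu_def split: if_splits\<close>)
  have num: "walk_prob V E ends c (\<mu> a) N (\<lambda>xs. xs ! i = x \<and> (\<forall>n\<in>{1..N}. h (xs ! n) = as n)) = \<mu> (as i) x * P"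
    if "i \<le> N" "x \<in> V" for i x
    using I2[of N as i x 1] as_range vert that as0 unfolding P_def by simp
  show ?thesis
  proof (intro allI impI ballI)
    fix i x assume i: "i \<le> N" and x: "x \<in> V" and hx: "h x = as i"
    show "walk_prob V E ends c (\<mu> a) N (\<lambda>xs. xs ! i = x \<and> (\<forall>n\<in>{1..N}. h (xs ! n) = as n))
        / walk_prob V E ends c (\<mu> a) N (\<lambda>xs. \<forall>n\<in>{1..N}. h (xs ! n) = as n) = \<mu> (as i) x"
    proof (cases "eta E ends c h v0 = 0")
      case True
      then show ?thesis unfolding num[OF i x] by (simp add: mu_def)
    next
      case False
      obtain z where z: "z \<in> V" "h z = a" using level_a_ne by blast
      have "(\<Sum>x\<in>V. \<mu> a x) = (\<Sum>x\<in>V. if h x = a then seg_length E ends c h x else 0) / eta E ends c h v0"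
        unfolding sum_divide_distrib by (intro sum.cong refl) (auto simp: mu_def)
      also have "\<dots> = 1" using flow[OF a_range z] False by simp
      finally have "(\<Sum>x\<in>V. \<mu> a x) = 1" .
      then show ?thesis unfolding num[OF i x] den using Pnz by simp
    qed
  qed
qed


end
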